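(* Let $n \ge 5$ and let $S$ be a set of transpositions generating $S_n$. Let $G$ be the automorphism group of the Cayley graph $X = \mathrm{Cay}(S_n,S)$, let $G_e$ be the stabilizer in $G$ of the identity vertex $e$, and let $L_e$ be the subgroup of $G_e$ consisting of the automorphisms that fix $e$ and each of its neighbors. Then $G_e = L_e \rtimes \mathrm{Aut}(S_n,S)$, i.e. $G_e = L_e \,\mathrm{Aut}(S_n,S)$ with $L_e$ normal in $G_e$ and $L_e \cap \mathrm{Aut}(S_n,S) = 1$.
   Context: The Cayley graph $\mathrm{Cay}(S_n,S)$ has vertex set $S_n$ and edge set $\{\{h, sh\} : h \in S_n, s \in S\}$; the neighbors of $e$ are exactly the elements of $S$. $\mathrm{Aut}(S_n,S)$ denotes the group of group automorphisms $\phi$ of $S_n$ with $\phi(S) = S$; each such $\phi$ is a permutation of $S_n$ that fixes $e$ and is an automorphism of $\mathrm{Cay}(S_n,S)$, so $\mathrm{Aut}(S_n,S)$ is regarded as a subgroup of $G_e$. *)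

theory Defs
  imports "HOL-Algebra.Sym_Groups" "HOL-Algebra.Bij"
begin

definition transpositions :: "nat \<Rightarrow> (nat \<Rightarrow> nat) set" where
  "transpositions n = {transpose a b | a b. a \<in> {1..n} \<and> b \<in> {1..n} \<and> a \<noteq> b}"

definition cay_adj :: "nat \<Rightarrow> (nat \<Rightarrow> nat) set \<Rightarrow> (nat \<Rightarrow> nat) \<Rightarrow> (nat \<Rightarrow> nat) \<Rightarrow> bool" where
  "cay_adj n S g h \<longleftrightarrow> g \<in> carrier (sym_group n) \<and> h \<in> carrier (sym_group n) \<and>
     (\<exists>s\<in>S. h = s \<otimes>\<^bsub>sym_group n\<^esub> g \<or> g = s \<otimes>\<^bsub>sym_group n\<^esub> h)"

definition cay_aut :: "nat \<Rightarrow> (nat \<Rightarrow> nat) set \<Rightarrow> ((nat \<Rightarrow> nat) \<Rightarrow> (nat \<Rightarrow> nat)) set" where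
  "cay_aut n S = {\<phi> \<in> carrier (BijGroup (carrier (sym_group n))).
     \<forall>g\<in>carrier (sym_group n). \<forall>h\<in>carrier (sym_group n).
        cay_adj n S g h \<longleftrightarrow> cay_adj n S (\<phi> g) (\<phi> h)}"

definition cay_stab :: "nat \<Rightarrow> (nat \<Rightarrow> nat) set \<Rightarrow> ((nat \<Rightarrow> nat) \<Rightarrow> (nat \<Rightarrow> nat)) set" where
  "cay_stab n S = {\<phi> \<in> cay_aut n S. \<phi> \<one>\<^bsub>sym_group n\<^esub> = \<one>\<^bsub>sym_group n\<^esub>}"

definition cay_L :: "nat \<Rightarrow> (nat \<Rightarrow> nat) set \<Rightarrow> ((nat \<Rightarrow> nat) \<Rightarrow> (nat \<Rightarrow> nat)) set" where
  "cay_L n S = {\<phi> \<in> cay_stab n S.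
     \<forall>h. cay_adj n S \<one>\<^bsub>sym_group n\<^esub> h \<longrightarrow> \<phi> h = h}"

definition aut_SnS :: "nat \<Rightarrow> (nat \<Rightarrow> nat) set \<Rightarrow> ((nat \<Rightarrow> nat) \<Rightarrow> (nat \<Rightarrow> nat)) set" where
  "aut_SnS n S = {\<phi> \<in> auto (sym_group n). \<phi> ` S = S}"

end

theory Submission
  imports Defs
begin


definition twoset :: "'b set \<Rightarrow> bool" where
  "twoset A \<longleftrightarrow> (\<exists>a b. a \<noteq> b \<and> A = {a,b})"

lemma twoset_inter:
  assumes "twoset A" "twoset B" "A \<noteq> B" "x \<in> A" "x \<in> B" "y \<in> A" "y \<in> B"
  shows "x = y"
  using assms unfolding twoset_def by auto

lemma twoset_other:
  assumes "twoset A" "x \<in> A" obtains y where "y \<noteq> x" "A = {x,y}"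
proof -
  from assms(1) obtain a b where ab: "a \<noteq> b" "A = {a,b}" unfolding twoset_def by blast
  show ?thesis
  proof (cases "x = a")
    case True then show ?thesis using that[of b] ab by auto
  next
    case False then have "x = b" using ab assms(2) by auto
    then show ?thesis using that[of a] ab by auto
  qed
qed

lemma three_sets:
  assumes "twoset A" "twoset B" "twoset C" "A \<noteq> B"
    "A \<inter> B \<noteq> {}" "A \<inter> C \<noteq> {}" "B \<inter> C \<noteq> {}" "C \<noteq> (A - B) \<union> (B - A)"
  shows "A \<inter> B \<inter> C \<noteq> {}"
proof
  assume e: "A \<inter> B \<inter> C = {}"
  obtain x where x: "x \<in> A" "x \<in> B" using assms(5) by blast
  obtain a where a: "a \<noteq> x" "A = {x,a}" using twoset_other[OF assms(1) x(1)] by blast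
  obtain b where b: "b \<noteq> x" "B = {x,b}" using twoset_other[OF assms(2) x(2)] by blast
  have ab: "a \<noteq> b" using a b assms(4) by auto
  have xC: "x \<notin> C" using e x by blast
  have aC: "a \<in> C" using assms(6) a xC by blast
  have bC: "b \<in> C" using assms(7) b xC by blast
  have "C = {a,b}" using twoset_other[OF assms(3) aC] bC ab by auto
  moreover have "(A - B) \<union> (B - A) = {a,b}" using a b ab by auto
  ultimately show False using assms(8) by simp
qed

lemma comb:
  fixes S :: "'a set" and \<epsilon> :: "'a \<Rightarrow> 'b set" and f :: "'a \<Rightarrow> 'a" and V :: "'b set"
  assumes two: "\<forall>s\<in>S. twoset (\<epsilon> s) \<and> \<epsilon> s \<subseteq> V"
    and inj: "inj_on \<epsilon> S"
    and bij: "bij_betw f S S"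
    and D: "\<forall>s\<in>S. \<forall>t\<in>S. (\<epsilon> s \<inter> \<epsilon> t = {}) = (\<epsilon> (f s) \<inter> \<epsilon> (f t) = {})"
    and T: "\<forall>s\<in>S. \<forall>t\<in>S. \<forall>u\<in>S. s \<noteq> t \<and> s \<noteq> u \<and> t \<noteq> u \<and> \<epsilon> s \<inter> \<epsilon> t \<noteq> {} \<and> \<epsilon> s \<inter> \<epsilon> u \<noteq> {} \<and> \<epsilon> t \<inter> \<epsilon> u \<noteq> {} \<longrightarrow>
         (\<epsilon> u = (\<epsilon> s - \<epsilon> t) \<union> (\<epsilon> t - \<epsilon> s) \<longleftrightarrow> \<epsilon> (f u) = (\<epsilon> (f s) - \<epsilon> (f t)) \<union> (\<epsilon> (f t) - \<epsilon> (f s)))"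
    and cover: "\<forall>i\<in>V. \<exists>s\<in>S. i \<in> \<epsilon> s"
    and noiso: "\<forall>s\<in>S. \<exists>t\<in>S. t \<noteq> s \<and> \<epsilon> s \<inter> \<epsilon> t \<noteq> {}"
    and fin: "finite V"
  shows "\<exists>\<sigma>. bij_betw \<sigma> V V \<and> (\<forall>s\<in>S. \<epsilon> (f s) = \<sigma> ` \<epsilon> s)"
proof -
  have fS: "\<And>s. s \<in> S \<Longrightarrow> f s \<in> S" using bij bij_betwE by blast
  have finj: "\<And>s t. s \<in> S \<Longrightarrow> t \<in> S \<Longrightarrow> f s = f t \<Longrightarrow> s = t"
    using bij unfolding bij_betw_def inj_on_def by blast
  have einj: "\<And>s t. s \<in> S \<Longrightarrow> t \<in> S \<Longrightarrow> \<epsilon> s = \<epsilon> t \<Longrightarrow> s = t"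
    using inj unfolding inj_on_def by blast
  have tw: "\<And>s. s \<in> S \<Longrightarrow> twoset (\<epsilon> s)" using two by blast
  have Dist: "\<And>s t. s \<in> S \<Longrightarrow> t \<in> S \<Longrightarrow> s \<noteq> t \<Longrightarrow> \<epsilon> (f s) \<noteq> \<epsilon> (f t)"
    using fS finj einj by blast
  have Dne: "\<And>s t x. s \<in> S \<Longrightarrow> t \<in> S \<Longrightarrow> x \<in> \<epsilon> s \<Longrightarrow> x \<in> \<epsilon> t \<Longrightarrow> \<epsilon> (f s) \<inter> \<epsilon> (f t) \<noteq> {}"
    using D by blast
  have Dne': "\<And>s t x. s \<in> S \<Longrightarrow> t \<in> S \<Longrightarrow> x \<in> \<epsilon> (f s) \<Longrightarrow> x \<in> \<epsilon> (f t) \<Longrightarrow> \<epsilon> s \<inter> \<epsilon> t \<noteq> {}"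
    using D by blast
  define deg2 where "deg2 i \<longleftrightarrow> (\<exists>s\<in>S. \<exists>t\<in>S. s \<noteq> t \<and> i \<in> \<epsilon> s \<and> i \<in> \<epsilon> t)" for i
  define P where "P i x \<longleftrightarrow> (\<forall>s\<in>S. i \<in> \<epsilon> s \<longrightarrow> x \<in> \<epsilon> (f s))" for i x
  define c where "c i = (THE x. P i x)" for i
  have K2: "\<epsilon> (f s) \<inter> \<epsilon> (f t) \<inter> \<epsilon> (f u) \<noteq> {}"
    if "s \<in> S" "t \<in> S" "u \<in> S" "s \<noteq> t" "s \<noteq> u" "t \<noteq> u" "i \<in> \<epsilon> s" "i \<in> \<epsilon> t" "i \<in> \<epsilon> u" for s t u i
  proof (rule three_sets)
    show "twoset (\<epsilon> (f s))" "twoset (\<epsilon> (f t))" "twoset (\<epsilon> (f u))" using that tw fS by auto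
    show "\<epsilon> (f s) \<noteq> \<epsilon> (f t)" using Dist that by auto
    show "\<epsilon> (f s) \<inter> \<epsilon> (f t) \<noteq> {}" "\<epsilon> (f s) \<inter> \<epsilon> (f u) \<noteq> {}" "\<epsilon> (f t) \<inter> \<epsilon> (f u) \<noteq> {}"
      using Dne that by blast+
    have "\<epsilon> u \<noteq> (\<epsilon> s - \<epsilon> t) \<union> (\<epsilon> t - \<epsilon> s)" using that by blast
    moreover have "\<epsilon> s \<inter> \<epsilon> t \<noteq> {}" "\<epsilon> s \<inter> \<epsilon> u \<noteq> {}" "\<epsilon> t \<inter> \<epsilon> u \<noteq> {}" using that by blast+
    ultimately show "\<epsilon> (f u) \<noteq> (\<epsilon> (f s) - \<epsilon> (f t)) \<union> (\<epsilon> (f t) - \<epsilon> (f s))"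
      using T that by blast
  qed
  have K3: "P i (c i) \<and> (\<forall>y. P i y \<longrightarrow> y = c i)" if d: "deg2 i" for i
  proof -
    obtain s0 t0 where st: "s0 \<in> S" "t0 \<in> S" "s0 \<noteq> t0" "i \<in> \<epsilon> s0" "i \<in> \<epsilon> t0"
      using d unfolding deg2_def by blast
    obtain x where x: "x \<in> \<epsilon> (f s0)" "x \<in> \<epsilon> (f t0)" using Dne[OF st(1,2,4,5)] by blast
    have uniq: "y = x" if "y \<in> \<epsilon> (f s0)" "y \<in> \<epsilon> (f t0)" for y
      using twoset_inter[OF tw[OF fS[OF st(1)]] tw[OF fS[OF st(2)]] Dist[OF st(1-3)]] x that by blast
    have Px: "P i x"
      unfolding P_def
    proof (intro ballI impI)
      fix u assume u: "u \<in> S" "i \<in> \<epsilon> u"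
      show "x \<in> \<epsilon> (f u)"
      proof (cases "u = s0 \<or> u = t0")
        case True then show ?thesis using x by auto
      next
        case False
        then obtain y where "y \<in> \<epsilon> (f s0)" "y \<in> \<epsilon> (f t0)" "y \<in> \<epsilon> (f u)"
          using K2[OF st(1,2) u(1) st(3) _ _ st(4,5) u(2)] by blast
        then show ?thesis using uniq by auto
      qed
    qed
    have U: "\<forall>y. P i y \<longrightarrow> y = x"
    proof (intro allI impI)
      fix y assume "P i y"
      then have "y \<in> \<epsilon> (f s0)" "y \<in> \<epsilon> (f t0)" using st unfolding P_def by blast+
      then show "y = x" using uniq by blast
    qed
    have "c i = x" unfolding c_def
      by (rule the_equality) (use Px U in blast)+
    then show ?thesis using Px U by blast
  qed
  have K3a: "c i \<in> \<epsilon> (f s)" if "deg2 i" "s \<in> S" "i \<in> \<epsilon> s" for i s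
    using K3[OF that(1)] that unfolding P_def by blast
  define Q where "Q i x \<longleftrightarrow> (\<forall>s\<in>S. i \<in> \<epsilon> s \<longrightarrow> x \<in> \<epsilon> (f s) \<and> (\<forall>j\<in>\<epsilon> s. j \<noteq> i \<longrightarrow> x \<noteq> c j))" for i x
  define \<sigma> where "\<sigma> i = (if deg2 i then c i else (THE x. Q i x))" for i
  have L1: "deg2 j \<and> \<epsilon> (f s) = {\<sigma> i, \<sigma> j}"
    if "s \<in> S" "\<not> deg2 i" "\<epsilon> s = {i,j}" "i \<noteq> j" for s i j
  proof -
    have uniq: "t = s" if "t \<in> S" "i \<in> \<epsilon> t" for t
      using \<open>\<not> deg2 i\<close> \<open>s \<in> S\<close> \<open>\<epsilon> s = {i,j}\<close> that unfolding deg2_def by blast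
    obtain t where t: "t \<in> S" "t \<noteq> s" "\<epsilon> s \<inter> \<epsilon> t \<noteq> {}" using noiso \<open>s \<in> S\<close> by blast
    have "i \<notin> \<epsilon> t" using uniq t by blast
    then have "j \<in> \<epsilon> t" using t that(3) by auto
    then have dj: "deg2 j" unfolding deg2_def using t that by blast
    have cj: "c j \<in> \<epsilon> (f s)" using K3a[OF dj \<open>s \<in> S\<close>] that by simp
    obtain y where y: "y \<noteq> c j" "\<epsilon> (f s) = {c j, y}" using twoset_other[OF tw[OF fS[OF \<open>s \<in> S\<close>]] cj] by blast
    have Qy: "Q i y" unfolding Q_def
    proof (intro ballI impI)
      fix s' assume s': "s' \<in> S" "i \<in> \<epsilon> s'"
      then have "s' = s" using uniq by blast
      then show "y \<in> \<epsilon> (f s') \<and> (\<forall>j'\<in>\<epsilon> s'. j' \<noteq> i \<longrightarrow> y \<noteq> c j')" using y that by auto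
    qed
    have U2: "\<forall>x. Q i x \<longrightarrow> x = y"
    proof (intro allI impI)
      fix x assume "Q i x"
      then have "x \<in> \<epsilon> (f s)" "x \<noteq> c j" using that unfolding Q_def by auto
      then show "x = y" using y by auto
    qed
    have "(THE x. Q i x) = y" by (rule the_equality) (use Qy U2 in blast)+
    then have "\<sigma> i = y" "\<sigma> j = c j" unfolding \<sigma>_def using that(2) dj by auto
    then show ?thesis using dj y by auto
  qed
  have K: "\<epsilon> (f s) = \<sigma> ` \<epsilon> s" if s: "s \<in> S" for s
  proof -
    obtain i j where ij: "i \<noteq> j" "\<epsilon> s = {i,j}" using tw[OF s] unfolding twoset_def by blast
    show ?thesis
    proof (cases "deg2 i \<and> deg2 j")
      case nd: False
      show ?thesis
      proof (cases "deg2 i")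
        case False then show ?thesis using L1[OF s _ ij(2) ij(1)] ij by auto
      next
        case True then have "\<not> deg2 j" using nd by blast
        moreover have "\<epsilon> s = {j,i}" using ij by auto
        ultimately show ?thesis using L1[OF s _ _ ij(1)[symmetric]] ij
          by (auto simp: insert_commute)
      qed
    next
      case True
      then have di: "deg2 i" and dj: "deg2 j" by auto
      have ci: "c i \<in> \<epsilon> (f s)" and cj: "c j \<in> \<epsilon> (f s)" using K3a di dj s ij by auto
      have neq: "c i \<noteq> c j"
      proof
        assume eq: "c i = c j"
        obtain s' where s': "s' \<in> S" "s' \<noteq> s" "i \<in> \<epsilon> s'" using di unfolding deg2_def by metis
        obtain t' where t': "t' \<in> S" "t' \<noteq> s" "j \<in> \<epsilon> t'" using dj unfolding deg2_def by metis
        have tws: "twoset (\<epsilon> s)" "twoset (\<epsilon> s')" "twoset (\<epsilon> t')" using tw s s' t' by auto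
        have ne1: "\<epsilon> s \<noteq> \<epsilon> s'" "\<epsilon> s \<noteq> \<epsilon> t'" using einj s s' t' by auto
        have "s' \<noteq> t'"
        proof
          assume "s' = t'"
          then show False using twoset_inter[OF tws(1,2) ne1(1), of i j] ij s' t' by auto
        qed
        have x1: "c i \<in> \<epsilon> (f s')" using K3a[OF di s'(1,3)] .
        have x2: "c i \<in> \<epsilon> (f t')" using K3a[OF dj t'(1,3)] eq by simp
        have i1: "\<epsilon> s \<inter> \<epsilon> s' \<noteq> {}" "\<epsilon> s \<inter> \<epsilon> t' \<noteq> {}" using ij s' t' by auto
        have i2: "\<epsilon> s' \<inter> \<epsilon> t' \<noteq> {}" using Dne'[OF s'(1) t'(1) x1 x2] .
        have "\<epsilon> (f t') \<noteq> (\<epsilon> (f s) - \<epsilon> (f s')) \<union> (\<epsilon> (f s') - \<epsilon> (f s))" using x2 x1 ci by blast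
        then have "\<epsilon> t' \<noteq> (\<epsilon> s - \<epsilon> s') \<union> (\<epsilon> s' - \<epsilon> s)"
          using T s s' t' \<open>s' \<noteq> t'\<close> i1 i2 by metis
        then have "\<epsilon> s \<inter> \<epsilon> s' \<inter> \<epsilon> t' \<noteq> {}"
          using three_sets[OF tws ne1(1) i1 i2] by blast
        then obtain y where y: "y \<in> \<epsilon> s" "y \<in> \<epsilon> s'" "y \<in> \<epsilon> t'" by blast
        have iS: "i \<in> \<epsilon> s" "j \<in> \<epsilon> s" using ij by auto
        have "y = i" using twoset_inter[OF tws(1,2) ne1(1) y(1,2) iS(1) s'(3)] .
        then have it: "i \<in> \<epsilon> t'" using y by simp
        show False using twoset_inter[OF tws(1,3) ne1(2) iS(1) it iS(2) t'(3)] ij by simp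
      qed
      obtain y where y: "y \<noteq> c i" "\<epsilon> (f s) = {c i, y}" using twoset_other[OF tw[OF fS[OF s]] ci] by blast
      have "y = c j" using y cj neq by auto
      then show ?thesis using y ij di dj unfolding \<sigma>_def by auto
    qed
  qed
  have into: "\<sigma> ` V \<subseteq> V"
  proof
    fix x assume "x \<in> \<sigma> ` V"
    then obtain i where i: "i \<in> V" "x = \<sigma> i" by blast
    obtain s where "s \<in> S" "i \<in> \<epsilon> s" using cover i by blast
    then show "x \<in> V" using K[of s] two fS[of s] i by auto
  qed
  have injs: "inj_on \<sigma> V"
  proof (rule inj_onI, rule ccontr)
    fix i j assume i: "i \<in> V" and j: "j \<in> V" and eq: "\<sigma> i = \<sigma> j" and ne: "i \<noteq> j"
    obtain s where s: "s \<in> S" "i \<in> \<epsilon> s" using cover i by blast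
    obtain t where t: "t \<in> S" "j \<in> \<epsilon> t" using cover j by blast
    show False
    proof (cases "\<exists>u\<in>S. \<epsilon> u = {i,j}")
      case True
      then obtain u where u: "u \<in> S" "\<epsilon> u = {i,j}" by blast
      have "\<epsilon> (f u) = {\<sigma> i}" using K[OF u(1)] u eq by auto
      then show False using tw[OF fS[OF u(1)]] unfolding twoset_def by (metis insertI1 insert_commute singletonD)
    next
      case False
      have "\<sigma> i \<in> \<epsilon> (f s)" "\<sigma> j \<in> \<epsilon> (f t)" using K s t by auto
      then have "\<epsilon> s \<inter> \<epsilon> t \<noteq> {}" using Dne'[OF s(1) t(1)] eq by auto
      then obtain k where k: "k \<in> \<epsilon> s" "k \<in> \<epsilon> t" by blast
      obtain k1 where k1: "k1 \<noteq> i" "\<epsilon> s = {i,k1}" using twoset_other[OF tw[OF s(1)] s(2)] by blast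
      obtain k2 where k2: "k2 \<noteq> j" "\<epsilon> t = {j,k2}" using twoset_other[OF tw[OF t(1)] t(2)] by blast
      have "k \<noteq> i" using k k1 k2 False t(1) ne by (auto simp: insert_commute)
      moreover have "k \<noteq> j" using k k1 k2 False s(1) ne by (auto simp: insert_commute)
      ultimately have kk: "k1 = k" "k2 = k" using k k1 k2 by auto
      have "\<epsilon> (f s) = \<epsilon> (f t)" using K[OF s(1)] K[OF t(1)] k1 k2 kk eq by auto
      then have "s = t" using einj fS finj s t by metis
      then show False using k1 k2 kk ne \<open>k \<noteq> i\<close> by (auto simp: doubleton_eq_iff)
    qed
  qed
  have "\<sigma> ` V = V" using endo_inj_surj[OF fin into injs] .
  then have "bij_betw \<sigma> V V" using injs unfolding bij_betw_def by blast
  then show ?thesis using K by blast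
qed



lemma F1:
  fixes p q w x y c d :: "'a"
  assumes "p\<noteq>q" "p\<noteq>w" "q\<noteq>w" "x\<noteq>y" "c\<noteq>d"
    and H: "\<And>z. transpose c d z = transpose x y (transpose p q (transpose p w z))"
  shows "{x,y} = {p,q} \<or> {x,y} = {p,w} \<or> {x,y} = {q,w}"
proof -
  note h = H[of p] H[of q] H[of w] H[of x] H[of y]
  show ?thesis using assms(1-5) h unfolding transpose_def by (auto split: if_splits)
qed

lemma F2:
  fixes p q r w x y c d :: "'a"
  assumes "p\<noteq>q" "p\<noteq>w" "q\<noteq>w" "p\<noteq>r" "q\<noteq>r" "r \<noteq> w" "x\<noteq>y" "c\<noteq>d"
    and H: "\<And>z. transpose c d z = transpose x y (transpose p q (transpose r w z))"
  shows "{x,y} = {p,q} \<or> {x,y} = {r,w}"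
proof -
  note h = H[of p] H[of q] H[of w] H[of r] H[of x] H[of y]
  show ?thesis using assms(1-8) h unfolding transpose_def by (auto split: if_splits)
qed

definition istr :: "('a \<Rightarrow> 'a) \<Rightarrow> bool" where
  "istr s \<longleftrightarrow> (\<exists>a b. a \<noteq> b \<and> s = transpose a b)"

definition mv :: "('a \<Rightarrow> 'a) \<Rightarrow> 'a set" where
  "mv s = {x. s x \<noteq> x}"

lemma mv_tr: "a \<noteq> b \<Longrightarrow> mv (transpose a b) = {a,b}"
  unfolding mv_def transpose_def by auto

lemma tr_eq_set: "{x,y} = {p,q} \<Longrightarrow> transpose x y = transpose p q"
  by (auto simp: doubleton_eq_iff transpose_commute)

lemma istr_eq: "istr s \<Longrightarrow> istr t \<Longrightarrow> mv s = mv t \<Longrightarrow> s = t"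
  unfolding istr_def by (auto simp: mv_tr intro: tr_eq_set)

lemma istr_invol: "istr s \<Longrightarrow> s \<circ> s = id"
  unfolding istr_def by auto

lemma istr_invol': "istr s \<Longrightarrow> s (s x) = x"
  unfolding istr_def by auto

lemma istr_neq_comp: "istr s \<Longrightarrow> istr t \<Longrightarrow> s \<noteq> t \<Longrightarrow> t \<circ> s \<noteq> id"
proof
  assume a: "istr s" "istr t" "s \<noteq> t" "t \<circ> s = id"
  have "t = t \<circ> (s \<circ> s)" using istr_invol[OF a(1)] by simp
  also have "\<dots> = (t \<circ> s) \<circ> s" by (simp add: comp_assoc)
  finally show False using a by simp
qed

lemma istr_disj_comm:
  assumes "istr s" "istr t" "mv s \<inter> mv t = {}" shows "s \<circ> t = t \<circ> s"
proof -
  obtain a b c d where "a \<noteq> b" "c \<noteq> d" "s = transpose a b" "t = transpose c d"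
    using assms unfolding istr_def by blast
  moreover have "a \<noteq> c" "a \<noteq> d" "b \<noteq> c" "b \<noteq> d" using assms(3) calculation by (auto simp: mv_tr)
  ultimately show ?thesis by (auto simp: fun_eq_iff transpose_def)
qed

lemma istr_share:
  assumes "istr s" "istr t" "s \<noteq> t" "mv s \<inter> mv t \<noteq> {}"
  obtains p q w where "p \<noteq> q" "p \<noteq> w" "q \<noteq> w" "s = transpose p q" "t = transpose p w"
proof -
  obtain a b c d where ab: "a \<noteq> b" "c \<noteq> d" "s = transpose a b" "t = transpose c d"
    using assms unfolding istr_def by blast
  have dd: "a = c \<or> a = d \<or> b = c \<or> b = d" using assms(4) ab by (auto simp: mv_tr)
  have s': "s = transpose b a" and t': "t = transpose d c" using ab by (auto simp: transpose_commute)
  from dd show ?thesis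
  proof (elim disjE)
    assume "a = c" then show ?thesis using that[of a b d] ab assms(3) by auto
  next
    assume "a = d" then show ?thesis using that[of a b c] ab(1-3) t' assms(3) by auto
  next
    assume "b = c" then show ?thesis using that[of b a d] ab(1,2,4) s' assms(3) by auto
  next
    assume "b = d" then show ?thesis using that[of b a c] ab(1,2) s' t' assms(3) by auto
  qed
qed

lemma tri_facts:
  assumes "p \<noteq> q" "p \<noteq> w" "q \<noteq> w"
  shows "transpose p q \<circ> transpose p w \<circ> transpose p q = transpose q w"
    and "transpose p w \<circ> transpose p q \<circ> transpose p w = transpose q w"
    and "transpose p q \<circ> transpose p w \<noteq> transpose p w \<circ> transpose p q"
  using assms by (auto simp: fun_eq_iff transpose_def)

lemma istr_F:
  assumes "istr a" "istr b" "istr s" "istr t" "s \<noteq> t" "a \<circ> s = b \<circ> t"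
  shows "a = s \<or> a = t \<or> a = s \<circ> t \<circ> s"
proof -
  have bb: "b = a \<circ> s \<circ> t"
  proof -
    have "a \<circ> s \<circ> t = b \<circ> (t \<circ> t)" using assms(6) by (simp add: comp_assoc)
    then show ?thesis using istr_invol[OF assms(4)] by simp
  qed
  obtain x y c d where xy: "x \<noteq> y" "a = transpose x y" "c \<noteq> d" "b = transpose c d"
    using assms(1,2) unfolding istr_def by blast
  show ?thesis
  proof (cases "mv s \<inter> mv t = {}")
    case True
    obtain p q r w where pq: "p \<noteq> q" "s = transpose p q" "r \<noteq> w" "t = transpose r w"
      using assms(3,4) unfolding istr_def by blast
    have "p \<noteq> r" "p \<noteq> w" "q \<noteq> r" "q \<noteq> w" using True pq by (auto simp: mv_tr)
    then have "{x,y} = {p,q} \<or> {x,y} = {r,w}"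
      using F2[of p q w r x y c d] pq xy bb by (auto simp: fun_eq_iff)
    then show ?thesis using pq xy by (auto intro: tr_eq_set)
  next
    case False
    obtain p q w where pq: "p \<noteq> q" "p \<noteq> w" "q \<noteq> w" "s = transpose p q" "t = transpose p w"
      using istr_share[OF assms(3,4,5) False] by blast
    have "{x,y} = {p,q} \<or> {x,y} = {p,w} \<or> {x,y} = {q,w}"
      using F1[of p q w x y c d] pq xy bb by (auto simp: fun_eq_iff)
    then show ?thesis using pq xy tri_facts(1)[OF pq(1-3)] by (auto intro: tr_eq_set)
  qed
qed

lemma tr_props:
  assumes "s \<in> transpositions n"
  shows "s \<in> carrier (sym_group n)" "istr s" "mv s \<subseteq> {1..n}" "s \<circ> s = id"
proof -
  obtain a b where ab: "a \<in> {1..n}" "b \<in> {1..n}" "a \<noteq> b" "s = transpose a b"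
    using assms unfolding transpositions_def by blast
  show "s \<in> carrier (sym_group n)" using ab by (simp add: sym_group_carrier permutes_swap_id)
  show "istr s" using ab unfolding istr_def by blast
  show "mv s \<subseteq> {1..n}" using ab by (simp add: mv_tr)
  show "s \<circ> s = id" using ab by simp
qed

lemma adj_iff:
  assumes "S \<subseteq> transpositions n"
  shows "cay_adj n S g h \<longleftrightarrow> g \<in> carrier (sym_group n) \<and> h \<in> carrier (sym_group n) \<and> (\<exists>a\<in>S. h = a \<circ> g)"
proof -
  have "(h = a \<circ> g \<or> g = a \<circ> h) \<longleftrightarrow> h = a \<circ> g" if "a \<in> S" for a
  proof -
    have inv: "a \<circ> a = id" using tr_props(4) assms that by blast
    have "g = a \<circ> h \<longleftrightarrow> h = a \<circ> g"
    proof
      assume "g = a \<circ> h" then have "a \<circ> g = (a \<circ> a) \<circ> h" by (simp add: comp_assoc)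
      then show "h = a \<circ> g" using inv by simp
    next
      assume "h = a \<circ> g" then have "a \<circ> h = (a \<circ> a) \<circ> g" by (simp add: comp_assoc)
      then show "g = a \<circ> h" using inv by simp
    qed
    then show ?thesis by blast
  qed
  then show ?thesis unfolding cay_adj_def sym_group_mult by metis
qed

lemma nbr_iff:
  assumes "S \<subseteq> transpositions n"
  shows "cay_adj n S id h \<longleftrightarrow> h \<in> S"
proof -
  have "id \<in> carrier (sym_group n)" by (simp add: sym_group_carrier)
  moreover have "h \<in> S \<Longrightarrow> h \<in> carrier (sym_group n)" using tr_props(1) assms by blast
  ultimately show ?thesis using adj_iff[OF assms] by auto
qed

definition CN :: "nat \<Rightarrow> (nat \<Rightarrow> nat) set \<Rightarrow> (nat \<Rightarrow> nat) \<Rightarrow> (nat \<Rightarrow> nat) \<Rightarrow> (nat \<Rightarrow> nat) set" where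
  "CN n S x y = {z. cay_adj n S x z \<and> cay_adj n S y z}"

lemma CN_sub: "CN n S x y \<subseteq> carrier (sym_group n)"
  unfolding CN_def cay_adj_def by auto

lemma CN_tr:
  assumes S: "S \<subseteq> transpositions n" and st: "s \<in> S" "t \<in> S" "s \<noteq> t"
  shows "CN n S s t = {id} \<union> (if t \<circ> s \<circ> t \<in> S then {t \<circ> s} else {}) \<union> (if s \<circ> t \<circ> s \<in> S then {s \<circ> t} else {})"
proof -
  have trS: "\<And>a. a \<in> S \<Longrightarrow> istr a \<and> a \<circ> a = id \<and> a \<in> carrier (sym_group n)"
    using tr_props S by blast
  have mulC: "\<And>a b. a \<in> S \<Longrightarrow> b \<in> S \<Longrightarrow> a \<circ> b \<in> carrier (sym_group n)"
    using trS by (simp add: sym_group_carrier permutes_compose)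
  have CN': "CN n S s t = {z. (\<exists>a\<in>S. z = a \<circ> s) \<and> (\<exists>b\<in>S. z = b \<circ> t)}"
    unfolding CN_def adj_iff[OF S] using trS st mulC by blast
  have ss: "s \<circ> s = id" "t \<circ> t = id" using trS st by auto
  show ?thesis
  proof (rule Set.set_eqI)
    fix z
    show "z \<in> CN n S s t \<longleftrightarrow> z \<in> {id} \<union> (if t \<circ> s \<circ> t \<in> S then {t \<circ> s} else {}) \<union> (if s \<circ> t \<circ> s \<in> S then {s \<circ> t} else {})"
    proof
      assume "z \<in> CN n S s t"
      then obtain a b where ab: "a \<in> S" "b \<in> S" "z = a \<circ> s" "z = b \<circ> t" unfolding CN' by blast
      have bb: "b = a \<circ> s \<circ> t"
      proof -
        have e: "a \<circ> s = b \<circ> t" using ab by simp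
        have "a \<circ> s \<circ> t = b \<circ> (t \<circ> t)" by (metis e comp_assoc)
        then show ?thesis using ss by simp
      qed
      have "a = s \<or> a = t \<or> a = s \<circ> t \<circ> s" using istr_F[of a b s t] trS ab st by metis
      then show "z \<in> {id} \<union> (if t \<circ> s \<circ> t \<in> S then {t \<circ> s} else {}) \<union> (if s \<circ> t \<circ> s \<in> S then {s \<circ> t} else {})"
      proof (elim disjE)
        assume "a = s" then show ?thesis using ab ss by simp
      next
        assume "a = t" then show ?thesis using ab bb by simp
      next
        assume a: "a = s \<circ> t \<circ> s"
        then have "z = s \<circ> t \<circ> (s \<circ> s)" using ab by (simp add: comp_assoc)
        then show ?thesis using a ab ss by simp
      qed
    next
      assume z: "z \<in> {id} \<union> (if t \<circ> s \<circ> t \<in> S then {t \<circ> s} else {}) \<union> (if s \<circ> t \<circ> s \<in> S then {s \<circ> t} else {})"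
      show "z \<in> CN n S s t" unfolding CN'
      proof -
        consider "z = id" | "t \<circ> s \<circ> t \<in> S" "z = t \<circ> s" | "s \<circ> t \<circ> s \<in> S" "z = s \<circ> t"
          using z by (auto split: if_splits)
        then show "z \<in> {z. (\<exists>a\<in>S. z = a \<circ> s) \<and> (\<exists>b\<in>S. z = b \<circ> t)}"
        proof cases
          case 1 then show ?thesis using st ss by (metis (mono_tags, lifting) mem_Collect_eq)
        next
          case 2
          have "z = (t \<circ> s \<circ> t) \<circ> t" using 2 ss by (simp add: comp_assoc)
          then show ?thesis using 2 st by blast
        next
          case 3
          have "z = (s \<circ> t \<circ> s) \<circ> s" using 3 ss by (simp add: comp_assoc)
          then show ?thesis using 3 st by blast
        qed
      qed
    qed
  qed
qed

lemma int_facts: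
  assumes "istr s" "istr t" "s \<noteq> t" "mv s \<inter> mv t \<noteq> {}"
  shows "t \<circ> s \<circ> t = s \<circ> t \<circ> s" "s \<circ> t \<noteq> t \<circ> s" "s \<circ> t \<noteq> id" "t \<circ> s \<noteq> id"
    "istr (s \<circ> t \<circ> s)" "mv (s \<circ> t \<circ> s) = (mv s - mv t) \<union> (mv t - mv s)"
    "s \<circ> (s \<circ> t \<circ> s) \<circ> s = t" "(s \<circ> t \<circ> s) \<circ> s \<circ> (s \<circ> t \<circ> s) = t"
    "(s \<circ> t \<circ> s) \<circ> s = s \<circ> t" "s \<circ> (s \<circ> t \<circ> s) = t \<circ> s"
proof -
  obtain p q w where pq: "p \<noteq> q" "p \<noteq> w" "q \<noteq> w" "s = transpose p q" "t = transpose p w"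
    using istr_share[OF assms] by blast
  have u: "s \<circ> t \<circ> s = transpose q w" using pq tri_facts[OF pq(1-3)] by simp
  show "t \<circ> s \<circ> t = s \<circ> t \<circ> s" "s \<circ> t \<noteq> t \<circ> s" using pq tri_facts[OF pq(1-3)] by auto
  show "s \<circ> t \<noteq> id" "t \<circ> s \<noteq> id" using istr_neq_comp assms by auto
  show "istr (s \<circ> t \<circ> s)" using u pq unfolding istr_def by blast
  show "mv (s \<circ> t \<circ> s) = (mv s - mv t) \<union> (mv t - mv s)" using u pq by (auto simp: mv_tr)
  show "s \<circ> (s \<circ> t \<circ> s) \<circ> s = t" "(s \<circ> t \<circ> s) \<circ> s \<circ> (s \<circ> t \<circ> s) = t"
    "(s \<circ> t \<circ> s) \<circ> s = s \<circ> t" "s \<circ> (s \<circ> t \<circ> s) = t \<circ> s"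
    unfolding u using pq by (auto simp: fun_eq_iff transpose_def)
qed

lemma card_CN_2:
  assumes S: "S \<subseteq> transpositions n" and st: "s \<in> S" "t \<in> S" "s \<noteq> t"
  shows "card (CN n S s t) = 2 \<longleftrightarrow> mv s \<inter> mv t = {}"
proof -
  have tr: "istr s" "istr t" "s \<circ> s = id" "t \<circ> t = id" using tr_props S st by auto
  show ?thesis
  proof (cases "mv s \<inter> mv t = {}")
    case True
    have c: "s \<circ> t = t \<circ> s" using istr_disj_comm tr True by blast
    have "t \<circ> s \<circ> t = s" using c tr by (metis comp_assoc comp_id)
    moreover have "s \<circ> t \<circ> s = t" using c tr by (metis comp_assoc id_comp)
    ultimately have "CN n S s t = {id, t \<circ> s}" using CN_tr[OF S st] st c by auto
    moreover have "t \<circ> s \<noteq> id" using istr_neq_comp tr st by blast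
    ultimately show ?thesis using True by auto
  next
    case False
    note I = int_facts[OF tr(1,2) st(3) False]
    have "CN n S s t = (if s \<circ> t \<circ> s \<in> S then {id, t \<circ> s, s \<circ> t} else {id})"
      using CN_tr[OF S st] I(1) by auto
    then have "card (CN n S s t) \<noteq> 2" using I(2-4) by (auto simp: card_insert_if)
    then show ?thesis using False by blast
  qed
qed

lemma CN_int:
  assumes S: "S \<subseteq> transpositions n" and st: "s \<in> S" "t \<in> S" "s \<noteq> t" "mv s \<inter> mv t \<noteq> {}"
  shows "CN n S s t = (if s \<circ> t \<circ> s \<in> S then {id, t \<circ> s, s \<circ> t} else {id})"
    "card (CN n S s t) = (if s \<circ> t \<circ> s \<in> S then 3 else 1)"
proof -
  have tr: "istr s" "istr t" using tr_props S st by auto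
  note I = int_facts[OF tr(1,2) st(3,4)]
  show c: "CN n S s t = (if s \<circ> t \<circ> s \<in> S then {id, t \<circ> s, s \<circ> t} else {id})"
    using CN_tr[OF S st(1-3)] I(1) by auto
  show "card (CN n S s t) = (if s \<circ> t \<circ> s \<in> S then 3 else 1)"
    unfolding c using I(2-4) by (auto simp: card_insert_if)
qed

lemma tri_CN:
  assumes S: "S \<subseteq> transpositions n" and stu: "s \<in> S" "t \<in> S" "u \<in> S" "s \<noteq> t" "s \<noteq> u" "t \<noteq> u"
    and i: "mv s \<inter> mv t \<noteq> {}" "mv s \<inter> mv u \<noteq> {}"
  shows "u = s \<circ> t \<circ> s \<longleftrightarrow> card (CN n S s t) = 3 \<and> CN n S s t = CN n S s u"
proof -
  have tr: "istr s" "istr t" "istr u" "s \<circ> s = id" using tr_props S stu by auto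
  note I = int_facts[OF tr(1,2) stu(4) i(1)]
  note J = int_facts[OF tr(1,3) stu(5) i(2)]
  show ?thesis
  proof
    assume u: "u = s \<circ> t \<circ> s"
    have "CN n S s t = {id, t \<circ> s, s \<circ> t}" using CN_int(1)[OF S stu(1,2,4) i(1)] u stu by simp
    moreover have "CN n S s u = {id, u \<circ> s, s \<circ> u}" using CN_int(1)[OF S stu(1,3,5) i(2)] u I(7) stu by simp
    moreover have "card (CN n S s t) = 3" using CN_int(2)[OF S stu(1,2,4) i(1)] u stu by simp
    ultimately show "card (CN n S s t) = 3 \<and> CN n S s t = CN n S s u" using u I(9,10) by auto
  next
    assume a: "card (CN n S s t) = 3 \<and> CN n S s t = CN n S s u"
    then have "s \<circ> t \<circ> s \<in> S" using CN_int(2)[OF S stu(1,2,4) i(1)] by (auto split: if_splits)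
    then have "s \<circ> t \<in> CN n S s u" using CN_int(1)[OF S stu(1,2,4) i(1)] a by auto
    then have "s \<circ> t = u \<circ> s \<or> s \<circ> t = s \<circ> u" using CN_int(1)[OF S stu(1,3,5) i(2)] I(3)
      by (auto split: if_splits)
    then show "u = s \<circ> t \<circ> s"
    proof
      assume "s \<circ> t = u \<circ> s"
      then have "s \<circ> t \<circ> s = u \<circ> (s \<circ> s)" by (simp add: comp_assoc)
      then show ?thesis using tr by simp
    next
      assume "s \<circ> t = s \<circ> u"
      then have "(s \<circ> s) \<circ> t = (s \<circ> s) \<circ> u" by (simp add: comp_assoc)
      then show ?thesis using tr stu by simp
    qed
  qed
qed

lemma tri_mv:
  assumes "istr s" "istr t" "istr u" "s \<noteq> t" "mv s \<inter> mv t \<noteq> {}"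
  shows "u = s \<circ> t \<circ> s \<longleftrightarrow> mv u = (mv s - mv t) \<union> (mv t - mv s)"
  using int_facts[OF assms(1,2,4,5)] istr_eq[OF assms(3)] by metis

lemma inv_tr:
  assumes "s \<in> transpositions n" shows "inv\<^bsub>sym_group n\<^esub> s = s"
proof -
  interpret group "sym_group n" by (rule sym_group_is_group)
  show ?thesis by (rule inv_equality) (use tr_props[OF assms] in \<open>simp_all add: sym_group_mult sym_group_one\<close>)
qed

lemma gen_induct:
  assumes S: "S \<subseteq> transpositions n" and g: "g \<in> generate (sym_group n) S"
    and P1: "P id" and PS: "\<And>s. s \<in> S \<Longrightarrow> P s" and Pm: "\<And>x y. P x \<Longrightarrow> P y \<Longrightarrow> P (x \<circ> y)"
  shows "P g"
  using g
proof (induct g rule: generate.induct)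
  case one then show ?case using P1 by (simp only: sym_group_one)
next
  case (incl h) then show ?case using PS by simp
next
  case (inv h) then show ?case using PS inv_tr S by auto
next
  case (eng h1 h2) then show ?case using Pm[of h1 h2] by (simp only: sym_group_mult)
qed

lemma cover:
  assumes S: "S \<subseteq> transpositions n" and gen: "generate (sym_group n) S = carrier (sym_group n)"
    and n: "n \<ge> 2" and i: "i \<in> {1..n}"
  shows "\<exists>s\<in>S. i \<in> mv s"
proof (rule ccontr)
  assume "\<not> ?thesis"
  then have fx: "\<And>s. s \<in> S \<Longrightarrow> s i = i" unfolding mv_def by blast
  define j where "j = (if i = 1 then 2 else (1::nat))"
  have j: "j \<in> {1..n}" "j \<noteq> i" using n i unfolding j_def by auto
  have "transpose i j \<in> carrier (sym_group n)" using i j by (simp add: sym_group_carrier permutes_swap_id)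
  then have "transpose i j \<in> generate (sym_group n) S" using gen by simp
  then have "transpose i j i = i" by (rule gen_induct[OF S, where P = "\<lambda>g. g i = i"]) (auto simp: fx)
  then show False using j by simp
qed

lemma noiso:
  assumes S: "S \<subseteq> transpositions n" and gen: "generate (sym_group n) S = carrier (sym_group n)"
    and n: "n \<ge> 3" and s: "s \<in> S"
  shows "\<exists>t\<in>S. t \<noteq> s \<and> mv s \<inter> mv t \<noteq> {}"
proof (rule ccontr)
  assume "\<not> ?thesis"
  then have dis: "\<And>t. t \<in> S \<Longrightarrow> t \<noteq> s \<Longrightarrow> mv s \<inter> mv t = {}" by blast
  obtain a b where ab: "a \<in> {1..n}" "b \<in> {1..n}" "a \<noteq> b" "s = transpose a b"
    using s S unfolding transpositions_def by blast
  have PS: "t a \<in> {a,b} \<and> t b \<in> {a,b}" if t: "t \<in> S" for t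
  proof (cases "t = s")
    case True then show ?thesis using ab by simp
  next
    case False
    then have "mv s \<inter> mv t = {}" using dis t by blast
    then have "a \<notin> mv t" "b \<notin> mv t" using ab by (auto simp: mv_tr)
    then show ?thesis unfolding mv_def by auto
  qed
  have "\<exists>k\<in>{1,2,3::nat}. k \<noteq> a \<and> k \<noteq> b" by auto
  then obtain k where k0: "k \<in> {1,2,3::nat}" "k \<noteq> a" "k \<noteq> b" by blast
  then have k: "k \<in> {1..n}" "k \<noteq> a" "k \<noteq> b" using n by auto
  have "transpose a k \<in> carrier (sym_group n)" using ab k by (simp add: sym_group_carrier permutes_swap_id)
  then have "transpose a k \<in> generate (sym_group n) S" using gen by simp
  then have "transpose a k a \<in> {a,b} \<and> transpose a k b \<in> {a,b}"
    by (rule gen_induct[OF S, where P = "\<lambda>g. g a \<in> {a,b} \<and> g b \<in> {a,b}"]) (use PS in auto)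
  then show False using k by simp
qed

lemma aut_facts:
  assumes "\<phi> \<in> cay_aut n S"
  shows "bij_betw \<phi> (carrier (sym_group n)) (carrier (sym_group n))"
    "\<And>g h. g \<in> carrier (sym_group n) \<Longrightarrow> h \<in> carrier (sym_group n) \<Longrightarrow> cay_adj n S g h \<longleftrightarrow> cay_adj n S (\<phi> g) (\<phi> h)"
  using assms unfolding cay_aut_def BijGroup_def Bij_def by auto

lemma CN_img:
  assumes "\<phi> \<in> cay_aut n S" "x \<in> carrier (sym_group n)" "y \<in> carrier (sym_group n)"
  shows "\<phi> ` CN n S x y = CN n S (\<phi> x) (\<phi> y)"
proof -
  note A = aut_facts[OF assms(1)]
  have C: "\<And>z. cay_adj n S x z \<Longrightarrow> z \<in> carrier (sym_group n)" unfolding cay_adj_def by blast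
  show ?thesis
  proof (rule Set.set_eqI)
    fix z'
    show "z' \<in> \<phi> ` CN n S x y \<longleftrightarrow> z' \<in> CN n S (\<phi> x) (\<phi> y)"
    proof
      assume "z' \<in> \<phi> ` CN n S x y"
      then obtain z where z: "z \<in> CN n S x y" "z' = \<phi> z" by blast
      then have "z \<in> carrier (sym_group n)" using CN_sub by blast
      then show "z' \<in> CN n S (\<phi> x) (\<phi> y)" using z A(2) assms(2,3) unfolding CN_def by auto
    next
      assume z': "z' \<in> CN n S (\<phi> x) (\<phi> y)"
      then have "z' \<in> carrier (sym_group n)" using CN_sub by blast
      then obtain z where z: "z \<in> carrier (sym_group n)" "z' = \<phi> z" using A(1) unfolding bij_betw_def by blast
      then have "z \<in> CN n S x y" using z' A(2) assms(2,3) unfolding CN_def by auto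
      then show "z' \<in> \<phi> ` CN n S x y" using z by blast
    qed
  qed
qed

lemma stab_S:
  assumes S: "S \<subseteq> transpositions n" and \<phi>: "\<phi> \<in> cay_stab n S"
  shows "\<phi> ` S = S" "bij_betw \<phi> S S"
proof -
  have a: "\<phi> \<in> cay_aut n S" and e: "\<phi> id = id" using \<phi> unfolding cay_stab_def by (auto simp: sym_group_one)
  note A = aut_facts[OF a]
  have idC: "id \<in> carrier (sym_group n)" by (simp add: sym_group_carrier)
  have SC: "S \<subseteq> carrier (sym_group n)" using tr_props(1) S by blast
  have key: "h \<in> S \<longleftrightarrow> \<phi> h \<in> S" if "h \<in> carrier (sym_group n)" for h
    using A(2)[OF idC that] e nbr_iff[OF S] by simp
  show "\<phi> ` S = S"
  proof
    show "\<phi> ` S \<subseteq> S" using key SC by blast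
    show "S \<subseteq> \<phi> ` S"
    proof
      fix h assume h: "h \<in> S"
      then obtain h' where "h' \<in> carrier (sym_group n)" "h = \<phi> h'" using A(1) SC unfolding bij_betw_def by blast
      then show "h \<in> \<phi> ` S" using key h by blast
    qed
  qed
  then show "bij_betw \<phi> S S" using A(1) SC unfolding bij_betw_def by (metis inj_on_subset)
qed



lemma perm_exists:
  assumes n: "n \<ge> 3" and S: "S \<subseteq> transpositions n"
    and gen: "generate (sym_group n) S = carrier (sym_group n)"
    and \<phi>: "\<phi> \<in> cay_stab n S"
  shows "\<exists>\<sigma>. \<sigma> permutes {1..n} \<and> (\<forall>s\<in>S. mv (\<phi> s) = \<sigma> ` mv s)"
proof -
  have aut: "\<phi> \<in> cay_aut n S" using \<phi> unfolding cay_stab_def by auto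
  note A = aut_facts[OF aut]
  have injC: "inj_on \<phi> (carrier (sym_group n))" using A(1) unfolding bij_betw_def by blast
  have trS: "\<And>s. s \<in> S \<Longrightarrow> istr s \<and> mv s \<subseteq> {1..n} \<and> s \<in> carrier (sym_group n)"
    using tr_props S by blast
  have twS: "\<And>s. s \<in> S \<Longrightarrow> twoset (mv s)"
    using trS unfolding istr_def twoset_def by (metis mv_tr)
  have bij: "bij_betw \<phi> S S" using stab_S[OF S \<phi>] by blast
  have fS: "\<And>s. s \<in> S \<Longrightarrow> \<phi> s \<in> S" using bij bij_betwE by blast
  have finj: "\<And>s t. s \<in> S \<Longrightarrow> t \<in> S \<Longrightarrow> s \<noteq> t \<Longrightarrow> \<phi> s \<noteq> \<phi> t"
    using bij unfolding bij_betw_def inj_on_def by blast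
  have CNc: "card (CN n S (\<phi> s) (\<phi> t)) = card (CN n S s t)" if "s \<in> S" "t \<in> S" for s t
  proof -
    have "card (\<phi> ` CN n S s t) = card (CN n S s t)"
      by (rule card_image) (rule inj_on_subset[OF injC CN_sub])
    then show ?thesis using CN_img[OF aut] trS that by metis
  qed
  have CNe: "(CN n S (\<phi> s) (\<phi> t) = CN n S (\<phi> s) (\<phi> u)) \<longleftrightarrow> (CN n S s t = CN n S s u)"
    if "s \<in> S" "t \<in> S" "u \<in> S" for s t u
  proof -
    have "(\<phi> ` CN n S s t = \<phi> ` CN n S s u) \<longleftrightarrow> (CN n S s t = CN n S s u)"
      by (rule inj_on_image_eq_iff[OF injC CN_sub CN_sub])
    then show ?thesis using CN_img[OF aut] trS that by metis
  qed
  have ne: "\<And>s. s \<in> S \<Longrightarrow> mv s \<noteq> {}" using twS unfolding twoset_def by blast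
  have D: "\<forall>s\<in>S. \<forall>t\<in>S. (mv s \<inter> mv t = {}) = (mv (\<phi> s) \<inter> mv (\<phi> t) = {})"
  proof (intro ballI)
    fix s t assume st: "s \<in> S" "t \<in> S"
    show "(mv s \<inter> mv t = {}) = (mv (\<phi> s) \<inter> mv (\<phi> t) = {})"
    proof (cases "s = t")
      case True then show ?thesis using ne st fS by auto
    next
      case False
      then show ?thesis using card_CN_2[OF S st False] card_CN_2[OF S fS[OF st(1)] fS[OF st(2)] finj[OF st False]]
          CNc[OF st] by simp
    qed
  qed
  have T: "\<forall>s\<in>S. \<forall>t\<in>S. \<forall>u\<in>S. s \<noteq> t \<and> s \<noteq> u \<and> t \<noteq> u \<and> mv s \<inter> mv t \<noteq> {} \<and> mv s \<inter> mv u \<noteq> {} \<and> mv t \<inter> mv u \<noteq> {} \<longrightarrow>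
         (mv u = (mv s - mv t) \<union> (mv t - mv s) \<longleftrightarrow> mv (\<phi> u) = (mv (\<phi> s) - mv (\<phi> t)) \<union> (mv (\<phi> t) - mv (\<phi> s)))"
  proof (intro ballI impI)
    fix s t u assume stu: "s \<in> S" "t \<in> S" "u \<in> S"
      and h: "s \<noteq> t \<and> s \<noteq> u \<and> t \<noteq> u \<and> mv s \<inter> mv t \<noteq> {} \<and> mv s \<inter> mv u \<noteq> {} \<and> mv t \<inter> mv u \<noteq> {}"
    have f1: "\<phi> s \<noteq> \<phi> t" "\<phi> s \<noteq> \<phi> u" "\<phi> t \<noteq> \<phi> u" using finj stu h by auto
    have f2: "mv (\<phi> s) \<inter> mv (\<phi> t) \<noteq> {}" "mv (\<phi> s) \<inter> mv (\<phi> u) \<noteq> {}" using D stu h by auto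
    have "mv u = (mv s - mv t) \<union> (mv t - mv s) \<longleftrightarrow> u = s \<circ> t \<circ> s"
      using tri_mv[of s t u] trS stu h by auto
    also have "\<dots> \<longleftrightarrow> card (CN n S s t) = 3 \<and> CN n S s t = CN n S s u"
      using tri_CN[OF S stu] h by auto
    also have "\<dots> \<longleftrightarrow> card (CN n S (\<phi> s) (\<phi> t)) = 3 \<and> CN n S (\<phi> s) (\<phi> t) = CN n S (\<phi> s) (\<phi> u)"
      using CNc[OF stu(1,2)] CNe[OF stu] by simp
    also have "\<dots> \<longleftrightarrow> \<phi> u = \<phi> s \<circ> \<phi> t \<circ> \<phi> s"
      using tri_CN[OF S fS[OF stu(1)] fS[OF stu(2)] fS[OF stu(3)] f1 f2] by simp
    also have "\<dots> \<longleftrightarrow> mv (\<phi> u) = (mv (\<phi> s) - mv (\<phi> t)) \<union> (mv (\<phi> t) - mv (\<phi> s))"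
      using tri_mv[of "\<phi> s" "\<phi> t" "\<phi> u"] trS fS stu f1 f2 by auto
    finally show "mv u = (mv s - mv t) \<union> (mv t - mv s) \<longleftrightarrow> mv (\<phi> u) = (mv (\<phi> s) - mv (\<phi> t)) \<union> (mv (\<phi> t) - mv (\<phi> s))" .
  qed
  have two: "\<forall>s\<in>S. twoset (mv s) \<and> mv s \<subseteq> {1..n}" using twS trS by blast
  have inj: "inj_on mv S" using trS istr_eq by (meson inj_onI)
  have cov: "\<forall>i\<in>{1..n}. \<exists>s\<in>S. i \<in> mv s" using cover[OF S gen] n by auto
  have iso: "\<forall>s\<in>S. \<exists>t\<in>S. t \<noteq> s \<and> mv s \<inter> mv t \<noteq> {}" using noiso[OF S gen n] by blast
  obtain \<sigma>0 where s0: "bij_betw \<sigma>0 {1..n} {1..n}" "\<forall>s\<in>S. mv (\<phi> s) = \<sigma>0 ` mv s"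
    using comb[OF two inj bij D T cov iso] by blast
  define \<sigma> where "\<sigma> i = (if i \<in> {1..n} then \<sigma>0 i else i)" for i
  have "bij_betw \<sigma> {1..n} {1..n} = bij_betw \<sigma>0 {1..n} {1..n}" by (rule bij_betw_cong) (simp add: \<sigma>_def)
  then have "bij_betw \<sigma> {1..n} {1..n}" using s0(1) by simp
  then have "\<sigma> permutes {1..n}" by (rule bij_imp_permutes) (auto simp: \<sigma>_def)
  moreover have "\<forall>s\<in>S. mv (\<phi> s) = \<sigma> ` mv s"
  proof
    fix s assume s: "s \<in> S"
    have "\<sigma> ` mv s = \<sigma>0 ` mv s" using trS[OF s] unfolding \<sigma>_def by (intro image_cong) auto
    then show "mv (\<phi> s) = \<sigma> ` mv s" using s0(2) s by simp
  qed
  ultimately show ?thesis by blast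
qed



lemma BG_simps:
  "carrier (BijGroup A) = Bij A"
  "x \<in> Bij A \<Longrightarrow> y \<in> Bij A \<Longrightarrow> x \<otimes>\<^bsub>BijGroup A\<^esub> y = compose A x y"
  "\<one>\<^bsub>BijGroup A\<^esub> = (\<lambda>x\<in>A. x)"
  by (simp_all add: BijGroup_def)

lemma Bij_inv_facts:
  assumes "f \<in> Bij A" "x \<in> A"
  shows "inv_into A f x \<in> A" "f (inv_into A f x) = x" "inv_into A f (f x) = x" "f x \<in> A"
  using assms unfolding Bij_def bij_betw_def
  by (auto simp: inv_into_into f_inv_into_f inv_into_f_f)

lemma stab_memI:
  assumes "\<phi> \<in> Bij (carrier (sym_group n))"
    "\<And>g h. g \<in> carrier (sym_group n) \<Longrightarrow> h \<in> carrier (sym_group n) \<Longrightarrow> cay_adj n S g h \<longleftrightarrow> cay_adj n S (\<phi> g) (\<phi> h)"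
    "\<phi> id = id"
  shows "\<phi> \<in> cay_stab n S"
  using assms unfolding cay_stab_def cay_aut_def BG_simps sym_group_one by blast

lemma stab_memD:
  assumes "\<phi> \<in> cay_stab n S"
  shows "\<phi> \<in> Bij (carrier (sym_group n))"
    "\<And>g h. g \<in> carrier (sym_group n) \<Longrightarrow> h \<in> carrier (sym_group n) \<Longrightarrow> cay_adj n S g h \<longleftrightarrow> cay_adj n S (\<phi> g) (\<phi> h)"
    "\<phi> id = id"
  using assms unfolding cay_stab_def cay_aut_def BG_simps sym_group_one by blast+

lemma stab_subgroup:
  assumes S: "S \<subseteq> transpositions n"
  shows "subgroup (cay_stab n S) (BijGroup (carrier (sym_group n)))"
proof -
  let ?C = "carrier (sym_group n)"
  have idC: "id \<in> ?C" by (simp add: sym_group_carrier)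
  interpret B: group "BijGroup ?C" by (rule group_BijGroup)
  show ?thesis
  proof (rule B.subgroupI)
    show "cay_stab n S \<subseteq> carrier (BijGroup ?C)" using stab_memD(1) BG_simps by blast
    have "(\<lambda>x\<in>?C. x) \<in> cay_stab n S" by (rule stab_memI) (use id_Bij idC in auto)
    then show "cay_stab n S \<noteq> {}" by blast
  next
    fix \<phi> assume \<phi>: "\<phi> \<in> cay_stab n S"
    note B = stab_memD(1)[OF \<phi>] and adj = stab_memD(2)[OF \<phi>] and e = stab_memD(3)[OF \<phi>]
    note I = Bij_inv_facts[OF B]
    have "inv\<^bsub>BijGroup ?C\<^esub> \<phi> = (\<lambda>x\<in>?C. inv_into ?C \<phi> x)" using inv_BijGroup[OF B] .
    moreover have "(\<lambda>x\<in>?C. inv_into ?C \<phi> x) \<in> cay_stab n S"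
    proof (rule stab_memI)
      show "(\<lambda>x\<in>?C. inv_into ?C \<phi> x) \<in> Bij ?C" using restrict_inv_into_Bij[OF B] .
      fix g h assume g: "g \<in> ?C" and h: "h \<in> ?C"
      show "cay_adj n S g h \<longleftrightarrow> cay_adj n S ((\<lambda>x\<in>?C. inv_into ?C \<phi> x) g) ((\<lambda>x\<in>?C. inv_into ?C \<phi> x) h)"
        using adj[OF I(1)[OF g] I(1)[OF h]] I(2)[OF g] I(2)[OF h] g h by simp
    next
      show "(\<lambda>x\<in>?C. inv_into ?C \<phi> x) id = id" using I(3)[OF idC] e idC by simp
    qed
    ultimately show "inv\<^bsub>BijGroup ?C\<^esub> \<phi> \<in> cay_stab n S" by simp
  next
    fix \<phi> \<psi> assume \<phi>: "\<phi> \<in> cay_stab n S" and \<psi>: "\<psi> \<in> cay_stab n S"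
    note B = stab_memD(1)[OF \<phi>] stab_memD(1)[OF \<psi>]
    have "compose ?C \<phi> \<psi> \<in> cay_stab n S"
    proof (rule stab_memI)
      show "compose ?C \<phi> \<psi> \<in> Bij ?C" using compose_Bij[OF B] .
      fix g h assume g: "g \<in> ?C" and h: "h \<in> ?C"
      have "cay_adj n S g h \<longleftrightarrow> cay_adj n S (\<psi> g) (\<psi> h)" using stab_memD(2)[OF \<psi> g h] .
      also have "\<dots> \<longleftrightarrow> cay_adj n S (\<phi> (\<psi> g)) (\<phi> (\<psi> h))"
        using stab_memD(2)[OF \<phi> Bij_inv_facts(4)[OF B(2) g] Bij_inv_facts(4)[OF B(2) h]] .
      finally show "cay_adj n S g h \<longleftrightarrow> cay_adj n S (compose ?C \<phi> \<psi> g) (compose ?C \<phi> \<psi> h)"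
        using g h by (simp add: compose_def)
    next
      show "compose ?C \<phi> \<psi> id = id" using stab_memD(3)[OF \<phi>] stab_memD(3)[OF \<psi>] idC by (simp add: compose_def)
    qed
    then show "\<phi> \<otimes>\<^bsub>BijGroup ?C\<^esub> \<psi> \<in> cay_stab n S" using BG_simps(2)[OF B] by simp
  qed
qed

lemma L_memI: "\<phi> \<in> cay_stab n S \<Longrightarrow> (\<And>h. cay_adj n S id h \<Longrightarrow> \<phi> h = h) \<Longrightarrow> \<phi> \<in> cay_L n S"
  unfolding cay_L_def sym_group_one by blast

lemma L_memD: "\<phi> \<in> cay_L n S \<Longrightarrow> \<phi> \<in> cay_stab n S"
   "\<phi> \<in> cay_L n S \<Longrightarrow> cay_adj n S id h \<Longrightarrow> \<phi> h = h"
  unfolding cay_L_def sym_group_one by blast+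

lemma L_subgroup:
  assumes S: "S \<subseteq> transpositions n"
  shows "subgroup (cay_L n S) (BijGroup (carrier (sym_group n)))"
proof -
  let ?C = "carrier (sym_group n)"
  interpret B: group "BijGroup ?C" by (rule group_BijGroup)
  note SG = stab_subgroup[OF S]
  have nbC: "\<And>h. cay_adj n S id h \<Longrightarrow> h \<in> ?C" unfolding cay_adj_def by blast
  show ?thesis
  proof (rule B.subgroupI)
    show "cay_L n S \<subseteq> carrier (BijGroup ?C)" using L_memD(1) subgroup.subset[OF SG] by blast
    have "\<one>\<^bsub>BijGroup ?C\<^esub> \<in> cay_L n S"
    proof (rule L_memI)
      show "\<one>\<^bsub>BijGroup ?C\<^esub> \<in> cay_stab n S" using subgroup.one_closed[OF SG] .
      fix h assume "cay_adj n S id h"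
      then show "\<one>\<^bsub>BijGroup ?C\<^esub> h = h" using nbC by (simp add: BG_simps)
    qed
    then show "cay_L n S \<noteq> {}" by blast
  next
    fix \<phi> assume \<phi>: "\<phi> \<in> cay_L n S"
    note s = L_memD(1)[OF \<phi>]
    note B = stab_memD(1)[OF s]
    have "inv\<^bsub>BijGroup ?C\<^esub> \<phi> = (\<lambda>x\<in>?C. inv_into ?C \<phi> x)" using inv_BijGroup[OF B] .
    moreover have "(\<lambda>x\<in>?C. inv_into ?C \<phi> x) \<in> cay_L n S"
    proof (rule L_memI)
      show "(\<lambda>x\<in>?C. inv_into ?C \<phi> x) \<in> cay_stab n S"
        using subgroup.m_inv_closed[OF SG s] inv_BijGroup[OF B] by simp
      fix h assume h: "cay_adj n S id h"
      have "inv_into ?C \<phi> (\<phi> h) = h" using Bij_inv_facts(3)[OF B nbC[OF h]] .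
      then show "(\<lambda>x\<in>?C. inv_into ?C \<phi> x) h = h" using L_memD(2)[OF \<phi> h] nbC[OF h] by simp
    qed
    ultimately show "inv\<^bsub>BijGroup ?C\<^esub> \<phi> \<in> cay_L n S" by simp
  next
    fix \<phi> \<psi> assume \<phi>: "\<phi> \<in> cay_L n S" and \<psi>: "\<psi> \<in> cay_L n S"
    note s = L_memD(1)[OF \<phi>] L_memD(1)[OF \<psi>]
    have "\<phi> \<otimes>\<^bsub>BijGroup ?C\<^esub> \<psi> \<in> cay_L n S"
    proof (rule L_memI)
      show "\<phi> \<otimes>\<^bsub>BijGroup ?C\<^esub> \<psi> \<in> cay_stab n S" using subgroup.m_closed[OF SG s] .
      fix h assume h: "cay_adj n S id h"
      have "compose ?C \<phi> \<psi> h = h" using L_memD(2)[OF \<phi> h] L_memD(2)[OF \<psi> h] nbC[OF h] by (simp add: compose_def)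
      then show "(\<phi> \<otimes>\<^bsub>BijGroup ?C\<^esub> \<psi>) h = h" using BG_simps(2)[OF stab_memD(1)[OF s(1)] stab_memD(1)[OF s(2)]] by simp
    qed
    then show "\<phi> \<otimes>\<^bsub>BijGroup ?C\<^esub> \<psi> \<in> cay_L n S" .
  qed
qed

lemma aut_in_stab:
  assumes S: "S \<subseteq> transpositions n" and \<psi>: "\<psi> \<in> aut_SnS n S"
  shows "\<psi> \<in> cay_stab n S"
proof -
  let ?C = "carrier (sym_group n)"
  have hom: "\<psi> \<in> hom (sym_group n) (sym_group n)" and B: "\<psi> \<in> Bij ?C" and SS: "\<psi> ` S = S"
    using \<psi> unfolding aut_SnS_def auto_def by auto
  have inj: "inj_on \<psi> ?C" using B unfolding Bij_def bij_betw_def by blast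
  have into: "\<And>g. g \<in> ?C \<Longrightarrow> \<psi> g \<in> ?C" using B Bij_imp_funcset by blast
  have SC: "S \<subseteq> ?C" using tr_props(1) S by blast
  have mul: "\<And>x y. x \<in> ?C \<Longrightarrow> y \<in> ?C \<Longrightarrow> \<psi> (x \<circ> y) = \<psi> x \<circ> \<psi> y"
    using hom_mult[OF hom] by (simp add: sym_group_mult)
  have cl: "\<And>x y. x \<in> ?C \<Longrightarrow> y \<in> ?C \<Longrightarrow> x \<circ> y \<in> ?C" by (simp add: sym_group_carrier permutes_compose)
  have e: "\<psi> id = id" using hom_one[OF hom sym_group_is_group sym_group_is_group] by (simp add: sym_group_one)
  have adj: "cay_adj n S g h \<longleftrightarrow> cay_adj n S (\<psi> g) (\<psi> h)" if gh: "g \<in> ?C" "h \<in> ?C" for g h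
  proof
    assume "cay_adj n S g h"
    then obtain a where a: "a \<in> S" "h = a \<circ> g" using adj_iff[OF S] by blast
    then have "\<psi> h = \<psi> a \<circ> \<psi> g" using mul SC gh by auto
    moreover have "\<psi> a \<in> S" using SS a by blast
    ultimately show "cay_adj n S (\<psi> g) (\<psi> h)" using adj_iff[OF S] into gh by blast
  next
    assume "cay_adj n S (\<psi> g) (\<psi> h)"
    then obtain a' where a': "a' \<in> S" "\<psi> h = a' \<circ> \<psi> g" using adj_iff[OF S] by blast
    then obtain a where a: "a \<in> S" "a' = \<psi> a" using SS by blast
    then have "\<psi> h = \<psi> (a \<circ> g)" using a' mul SC gh by auto
    then have "h = a \<circ> g" using inj gh cl SC a unfolding inj_on_def by blast
    then show "cay_adj n S g h" using adj_iff[OF S] gh a by blast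
  qed
  show ?thesis unfolding cay_stab_def cay_aut_def BG_simps sym_group_one using B adj e by blast
qed



lemma conj_tr:
  assumes \<sigma>: "\<sigma> permutes V"
  shows "\<sigma> \<circ> transpose a b \<circ> inv' \<sigma> = transpose (\<sigma> a) (\<sigma> b)"
proof (rule ext)
  fix x
  have b: "bij \<sigma>" using permutes_bij[OF \<sigma>] .
  have "transpose (\<sigma> a) (\<sigma> b) (\<sigma> (inv' \<sigma> x)) = \<sigma> (transpose (inv' \<sigma> (\<sigma> a)) (inv' \<sigma> (\<sigma> b)) (inv' \<sigma> x))"
    using transpose_apply_commute[OF b] .
  then show "(\<sigma> \<circ> transpose a b \<circ> inv' \<sigma>) x = transpose (\<sigma> a) (\<sigma> b) x"
    by (simp add: permutes_inverses[OF \<sigma>])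
qed

lemma psi_auto:
  assumes \<sigma>: "\<sigma> permutes {1..n}"
  shows "(\<lambda>g\<in>carrier (sym_group n). \<sigma> \<circ> g \<circ> inv' \<sigma>) \<in> auto (sym_group n)"
proof -
  let ?C = "carrier (sym_group n)"
  let ?\<psi> = "\<lambda>g\<in>?C. \<sigma> \<circ> g \<circ> inv' \<sigma>"
  have iv: "inv' \<sigma> permutes {1..n}" using permutes_inv[OF \<sigma>] .
  have into: "\<sigma> \<circ> g \<circ> inv' \<sigma> \<in> ?C" if "g \<in> ?C" for g
    using permutes_compose[OF iv permutes_compose[OF _ \<sigma>]] that by (simp add: sym_group_carrier)
  have hom: "?\<psi> \<in> hom (sym_group n) (sym_group n)"
    unfolding hom_def
  proof (intro CollectI conjI ballI)
    show "?\<psi> \<in> ?C \<rightarrow> ?C" using into by auto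
  next
    fix x y assume x: "x \<in> ?C" and y: "y \<in> ?C"
    have xy: "x \<otimes>\<^bsub>sym_group n\<^esub> y \<in> ?C" using x y sym_group_is_group by (simp add: group.subgroupE monoid.m_closed group.is_monoid)
    have "\<sigma> \<circ> (x \<circ> y) \<circ> inv' \<sigma> = (\<sigma> \<circ> x \<circ> inv' \<sigma>) \<circ> (\<sigma> \<circ> y \<circ> inv' \<sigma>)"
      by (simp add: fun_eq_iff permutes_inverses[OF \<sigma>])
    then show "?\<psi> (x \<otimes>\<^bsub>sym_group n\<^esub> y) = ?\<psi> x \<otimes>\<^bsub>sym_group n\<^esub> ?\<psi> y"
      using x y xy by (simp add: sym_group_mult)
  qed
  have inj: "inj_on ?\<psi> ?C"
  proof (rule inj_onI)
    fix x y assume x: "x \<in> ?C" and y: "y \<in> ?C" and e: "?\<psi> x = ?\<psi> y"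
    then have e': "\<sigma> \<circ> x \<circ> inv' \<sigma> = \<sigma> \<circ> y \<circ> inv' \<sigma>" by simp
    show "x = y"
    proof (rule ext)
      fix z
      have "\<sigma> (x (inv' \<sigma> (\<sigma> z))) = \<sigma> (y (inv' \<sigma> (\<sigma> z)))" using fun_cong[OF e', of "\<sigma> z"] by simp
      then show "x z = y z" using permutes_inverses[OF \<sigma>] by (metis)
    qed
  qed
  have img: "?\<psi> ` ?C = ?C"
  proof
    show "?\<psi> ` ?C \<subseteq> ?C" using into by auto
    show "?C \<subseteq> ?\<psi> ` ?C"
    proof
      fix y assume y: "y \<in> ?C"
      have x: "inv' \<sigma> \<circ> y \<circ> \<sigma> \<in> ?C"
        using permutes_compose[OF \<sigma> permutes_compose[OF _ iv]] y by (simp add: sym_group_carrier)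
      have "?\<psi> (inv' \<sigma> \<circ> y \<circ> \<sigma>) = y" using x by (simp add: fun_eq_iff permutes_inverses[OF \<sigma>])
      then show "y \<in> ?\<psi> ` ?C" using x by (metis image_eqI)
    qed
  qed
  have "?\<psi> \<in> Bij ?C" unfolding Bij_def using inj img by (simp add: bij_betw_def)
  then show ?thesis using hom unfolding auto_def by blast
qed



lemma exists_psi:
  assumes n: "n \<ge> 3" and S: "S \<subseteq> transpositions n"
    and gen: "generate (sym_group n) S = carrier (sym_group n)"
    and \<phi>: "\<phi> \<in> cay_stab n S"
  shows "\<exists>\<psi>\<in>aut_SnS n S. \<forall>s\<in>S. \<psi> s = \<phi> s"
proof -
  let ?C = "carrier (sym_group n)"
  obtain \<sigma> where \<sigma>: "\<sigma> permutes {1..n}" and mv: "\<forall>s\<in>S. mv (\<phi> s) = \<sigma> ` mv s"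
    using perm_exists[OF n S gen \<phi>] by blast
  define \<psi> where "\<psi> = (\<lambda>g\<in>?C. \<sigma> \<circ> g \<circ> inv' \<sigma>)"
  have eq: "\<psi> s = \<phi> s" if s: "s \<in> S" for s
  proof -
    obtain a b where ab: "a \<noteq> b" "s = transpose a b" using s S unfolding transpositions_def by blast
    have sC: "s \<in> ?C" using tr_props(1) S s by blast
    have fs: "\<phi> s \<in> S" using stab_S(1)[OF S \<phi>] s by blast
    obtain c d where cd: "c \<noteq> d" "\<phi> s = transpose c d" using fs S unfolding transpositions_def by blast
    have m: "mv (\<phi> s) = \<sigma> ` mv s" using mv s by blast
    have m1: "mv (\<phi> s) = {c,d}" using cd by (simp add: mv_tr)
    have m2: "mv s = {a,b}" using ab by (simp add: mv_tr)
    have "{c,d} = {\<sigma> a, \<sigma> b}" using m unfolding m1 m2 by simp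
    then have "transpose (\<sigma> a) (\<sigma> b) = \<phi> s" using cd tr_eq_set by metis
    moreover have "\<psi> s = transpose (\<sigma> a) (\<sigma> b)" using conj_tr[OF \<sigma>] sC ab unfolding \<psi>_def by simp
    ultimately show ?thesis by simp
  qed
  have "\<psi> ` S = \<phi> ` S" using eq by (rule image_cong[OF refl])
  then have "\<psi> ` S = S" using stab_S(1)[OF S \<phi>] by simp
  moreover have "\<psi> \<in> auto (sym_group n)" using psi_auto[OF \<sigma>] unfolding \<psi>_def .
  ultimately have "\<psi> \<in> aut_SnS n S" unfolding aut_SnS_def by blast
  then show ?thesis using eq by blast
qed

lemma inter_part:
  assumes S: "S \<subseteq> transpositions n"
    and gen: "generate (sym_group n) S = carrier (sym_group n)"
  shows "cay_L n S \<inter> aut_SnS n S = {\<one>\<^bsub>BijGroup (carrier (sym_group n))\<^esub>}"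
proof
  let ?C = "carrier (sym_group n)"
  have SC: "S \<subseteq> ?C" using tr_props(1) S by blast
  show "cay_L n S \<inter> aut_SnS n S \<subseteq> {\<one>\<^bsub>BijGroup ?C\<^esub>}"
  proof
    fix \<psi> assume \<psi>: "\<psi> \<in> cay_L n S \<inter> aut_SnS n S"
    have hom: "\<psi> \<in> hom (sym_group n) (sym_group n)" and B: "\<psi> \<in> Bij ?C"
      using \<psi> unfolding aut_SnS_def auto_def by auto
    have fS: "\<And>s. s \<in> S \<Longrightarrow> \<psi> s = s" using L_memD(2)[of \<psi>] \<psi> nbr_iff[OF S] by blast
    have e: "\<psi> id = id" using stab_memD(3)[OF L_memD(1)] \<psi> by blast
    have all: "g \<in> ?C \<and> \<psi> g = g" if g: "g \<in> ?C" for g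
    proof -
      have "g \<in> generate (sym_group n) S" using g gen by simp
      then show ?thesis
      proof (rule gen_induct[OF S, where P = "\<lambda>g. g \<in> ?C \<and> \<psi> g = g"])
        show "id \<in> ?C \<and> \<psi> id = id" using e by (simp add: sym_group_carrier)
        show "\<And>s. s \<in> S \<Longrightarrow> s \<in> ?C \<and> \<psi> s = s" using fS SC by blast
        fix x y assume x: "x \<in> ?C \<and> \<psi> x = x" and y: "y \<in> ?C \<and> \<psi> y = y"
        have "x \<circ> y \<in> ?C" using x y by (simp add: sym_group_carrier permutes_compose)
        moreover have "\<psi> (x \<circ> y) = \<psi> x \<circ> \<psi> y" using hom_mult[OF hom, of x y] x y by (simp add: sym_group_mult)
        ultimately show "x \<circ> y \<in> ?C \<and> \<psi> (x \<circ> y) = x \<circ> y" using x y by simp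
      qed
    qed
    have "\<psi> = (\<lambda>x\<in>?C. x)"
      by (rule extensionalityI[OF Bij_imp_extensional[OF B] restrict_extensional]) (use all in simp)
    then show "\<psi> \<in> {\<one>\<^bsub>BijGroup ?C\<^esub>}" by (simp add: BG_simps)
  qed
  show "{\<one>\<^bsub>BijGroup ?C\<^esub>} \<subseteq> cay_L n S \<inter> aut_SnS n S"
  proof -
    have "\<one>\<^bsub>BijGroup ?C\<^esub> \<in> cay_L n S" using subgroup.one_closed[OF L_subgroup[OF S]] .
    moreover have "(\<lambda>x\<in>?C. x) \<in> auto (sym_group n)" using group.id_in_auto[OF sym_group_is_group] .
    moreover have "(\<lambda>x\<in>?C. x) ` S = S" using SC by auto
    ultimately show ?thesis unfolding aut_SnS_def by (simp add: BG_simps)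
  qed
qed

lemma normal_part:
  assumes S: "S \<subseteq> transpositions n"
  shows "cay_L n S \<lhd> (BijGroup (carrier (sym_group n))) \<lparr>carrier := cay_stab n S\<rparr>"
proof -
  let ?C = "carrier (sym_group n)"
  let ?B = "BijGroup ?C"
  interpret B: group ?B by (rule group_BijGroup)
  note SGs = stab_subgroup[OF S] and SGL = L_subgroup[OF S]
  have Ls: "cay_L n S \<subseteq> cay_stab n S" using L_memD(1) by blast
  have gG: "group (?B\<lparr>carrier := cay_stab n S\<rparr>)" using subgroup.subgroup_is_group[OF SGs B.is_group] .
  have idC: "id \<in> ?C" by (simp add: sym_group_carrier)
  have nbC: "\<And>h. cay_adj n S id h \<Longrightarrow> h \<in> ?C" unfolding cay_adj_def by blast
  have conj: "x \<otimes>\<^bsub>?B\<^esub> h \<otimes>\<^bsub>?B\<^esub> inv\<^bsub>?B\<^esub> x \<in> cay_L n S" if x: "x \<in> cay_stab n S" and h: "h \<in> cay_L n S" for x h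
  proof (rule L_memI)
    have hs: "h \<in> cay_stab n S" using h Ls by blast
    show "x \<otimes>\<^bsub>?B\<^esub> h \<otimes>\<^bsub>?B\<^esub> inv\<^bsub>?B\<^esub> x \<in> cay_stab n S"
      using subgroup.m_closed[OF SGs subgroup.m_closed[OF SGs x hs] subgroup.m_inv_closed[OF SGs x]] .
    fix h0 assume h0: "cay_adj n S id h0"
    have Bx: "x \<in> Bij ?C" and Bh: "h \<in> Bij ?C" using stab_memD(1) x hs by auto
    have h0C: "h0 \<in> ?C" using nbC[OF h0] .
    define h' where "h' = inv_into ?C x h0"
    have h'C: "h' \<in> ?C" and xh': "x h' = h0" using Bij_inv_facts(1,2)[OF Bx h0C] unfolding h'_def by auto
    have "cay_adj n S id h' \<longleftrightarrow> cay_adj n S (x id) (x h')" using stab_memD(2)[OF x idC h'C] .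
    then have "cay_adj n S id h'" using h0 xh' stab_memD(3)[OF x] by simp
    then have hh': "h h' = h'" using L_memD(2)[OF h] by blast
    have xh: "x \<otimes>\<^bsub>?B\<^esub> h = compose ?C x h" using BG_simps(2)[OF Bx Bh] .
    have cB: "compose ?C x h \<in> Bij ?C" using compose_Bij[OF Bx Bh] .
    have "x \<otimes>\<^bsub>?B\<^esub> h \<otimes>\<^bsub>?B\<^esub> inv\<^bsub>?B\<^esub> x = compose ?C (compose ?C x h) (\<lambda>y\<in>?C. inv_into ?C x y)"
      using xh BG_simps(2)[OF cB restrict_inv_into_Bij[OF Bx]] inv_BijGroup[OF Bx] by simp
    then show "(x \<otimes>\<^bsub>?B\<^esub> h \<otimes>\<^bsub>?B\<^esub> inv\<^bsub>?B\<^esub> x) h0 = h0"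
      using h0C h'C hh' xh' unfolding h'_def by (simp add: compose_def)
  qed
  show ?thesis
  proof (subst group.normal_inv_iff[OF gG], intro conjI ballI)
    show "subgroup (cay_L n S) (?B\<lparr>carrier := cay_stab n S\<rparr>)" using B.subgroup_incl[OF SGL SGs Ls] .
  next
    fix x h assume x: "x \<in> carrier (?B\<lparr>carrier := cay_stab n S\<rparr>)" and h: "h \<in> cay_L n S"
    then have x': "x \<in> cay_stab n S" by simp
    have "inv\<^bsub>?B\<lparr>carrier := cay_stab n S\<rparr>\<^esub> x = inv\<^bsub>?B\<^esub> x" using B.m_inv_consistent[OF SGs x'] .
    then show "x \<otimes>\<^bsub>?B\<lparr>carrier := cay_stab n S\<rparr>\<^esub> h \<otimes>\<^bsub>?B\<lparr>carrier := cay_stab n S\<rparr>\<^esub> inv\<^bsub>?B\<lparr>carrier := cay_stab n S\<rparr>\<^esub> x \<in> cay_L n S"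
      using conj[OF x' h] by simp
  qed
qed

lemma prod_part:
  assumes n: "n \<ge> 3" and S: "S \<subseteq> transpositions n"
    and gen: "generate (sym_group n) S = carrier (sym_group n)"
  shows "cay_L n S <#>\<^bsub>BijGroup (carrier (sym_group n))\<^esub> aut_SnS n S = cay_stab n S"
proof
  let ?C = "carrier (sym_group n)"
  let ?B = "BijGroup ?C"
  interpret B: group ?B by (rule group_BijGroup)
  note SGs = stab_subgroup[OF S] and SGL = L_subgroup[OF S]
  show "cay_L n S <#>\<^bsub>?B\<^esub> aut_SnS n S \<subseteq> cay_stab n S"
  proof
    fix z assume "z \<in> cay_L n S <#>\<^bsub>?B\<^esub> aut_SnS n S"
    then obtain l a where l: "l \<in> cay_L n S" and a: "a \<in> aut_SnS n S" and z: "z = l \<otimes>\<^bsub>?B\<^esub> a"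
      unfolding set_mult_def by blast
    show "z \<in> cay_stab n S" using subgroup.m_closed[OF SGs L_memD(1)[OF l] aut_in_stab[OF S a]] z by simp
  qed
  show "cay_stab n S \<subseteq> cay_L n S <#>\<^bsub>?B\<^esub> aut_SnS n S"
  proof
    fix \<phi> assume \<phi>: "\<phi> \<in> cay_stab n S"
    obtain \<psi> where \<psi>: "\<psi> \<in> aut_SnS n S" and eq: "\<forall>s\<in>S. \<psi> s = \<phi> s" using exists_psi[OF n S gen \<phi>] by blast
    have \<psi>s: "\<psi> \<in> cay_stab n S" using aut_in_stab[OF S \<psi>] .
    have B\<phi>: "\<phi> \<in> Bij ?C" and B\<psi>: "\<psi> \<in> Bij ?C" using stab_memD(1) \<phi> \<psi>s by auto
    have c\<phi>: "\<phi> \<in> carrier ?B" and c\<psi>: "\<psi> \<in> carrier ?B" using B\<phi> B\<psi> by (simp_all add: BG_simps)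
    define l where "l = \<phi> \<otimes>\<^bsub>?B\<^esub> inv\<^bsub>?B\<^esub> \<psi>"
    have ls: "l \<in> cay_stab n S" unfolding l_def using subgroup.m_closed[OF SGs \<phi> subgroup.m_inv_closed[OF SGs \<psi>s]] .
    have lL: "l \<in> cay_L n S"
    proof (rule L_memI[OF ls])
      fix h assume "cay_adj n S id h"
      then have h: "h \<in> S" using nbr_iff[OF S] by blast
      then obtain s where s: "s \<in> S" "h = \<phi> s" using stab_S(1)[OF S \<phi>] by blast
      have sC: "s \<in> ?C" using tr_props(1) S s(1) by blast
      have hC: "h \<in> ?C" using tr_props(1) S h by blast
      have "\<psi> s = h" using eq s by simp
      then have iv: "inv_into ?C \<psi> h = s" using Bij_inv_facts(3)[OF B\<psi> sC] by simp
      have "l = compose ?C \<phi> (\<lambda>y\<in>?C. inv_into ?C \<psi> y)"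
        unfolding l_def using BG_simps(2)[OF B\<phi> restrict_inv_into_Bij[OF B\<psi>]] inv_BijGroup[OF B\<psi>] by simp
      then show "l h = h" using hC iv s by (simp add: compose_def)
    qed
    have "l \<otimes>\<^bsub>?B\<^esub> \<psi> = \<phi>"
      unfolding l_def using c\<phi> c\<psi> by (simp add: B.m_assoc)
    then show "\<phi> \<in> cay_L n S <#>\<^bsub>?B\<^esub> aut_SnS n S" unfolding set_mult_def using lL \<psi> by blast
  qed
qed

theorem proposition7:
  fixes n :: nat and S :: "(nat \<Rightarrow> nat) set"
  assumes "n \<ge> 5"
    and "S \<subseteq> transpositions n"
    and "generate (sym_group n) S = carrier (sym_group n)"
  shows "cay_L n S \<lhd> (BijGroup (carrier (sym_group n))) \<lparr>carrier := cay_stab n S\<rparr>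
       \<and> cay_L n S <#>\<^bsub>BijGroup (carrier (sym_group n))\<^esub> aut_SnS n S = cay_stab n S
       \<and> cay_L n S \<inter> aut_SnS n S = {\<one>\<^bsub>BijGroup (carrier (sym_group n))\<^esub>}"
proof -
  have n: "n \<ge> 3" using assms(1) by simp
  show ?thesis using normal_part[OF assms(2)] prod_part[OF n assms(2,3)] inter_part[OF assms(2,3)] by blast
qed


end
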